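(* Fix a client $k$ and a sparsification ratio $O_k\in(0,1)$. Let $q=r(d+\ell)$ and let $\mathcal{S}:\mathbb{R}^{q}\to\mathbb{R}^{q}$ be a (possibly random) sparsification operator keeping $u=O_k q$ nonzero entries ($0<u<q$) and satisfying, for all $x\in\mathbb{R}^q$, $\mathbb{E}\left[\|\mathcal{S}(x)-x\|_2^2\right]\le \left(1-\frac{u}{q}\right)\|x\|_2^2=(1-O_k)\|x\|_2^2$. Let $(\Delta\tilde{\theta}_k^t)_{t\ge 0}$ be the sequence of (concatenated) local LoRA updates of client $k$, and define the error-feedback memory by $\tilde m_k^0=0$, $\tilde{\theta}_k^t=\mathcal{S}(\tilde m_k^t+\Delta\tilde{\theta}_k^t)$ and $\tilde{m}_{k}^{t+1} = \tilde{m}_{k}^t +\Delta\tilde{\theta}_{k}^t-\tilde{\theta}_{k}^t$. Suppose the LoRA factors are trained with the near-orthogonality regularized loss (so that $\theta_{B,k}^{\mathsf T}\theta_{B,k}$ and $\theta_{A,k}\theta_{A,k}^{\mathsf T}$ are approximately diagonal). Then for every $t\ge 0$, $$\mathbb{E}\left[\left\|\tilde{m}_k^{t+1}\right\|_F^2\right] \leq \frac{4(1-O_k)}{O_k^2}\max_{0\leq i \leq t}\|\Delta\tilde{\theta}_k^i\|_F^2.$$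
   Context: LoRA: a pre-trained weight $\theta_P\in\mathbb{R}^{d\times\ell}$ is adapted by $\theta_P+\frac{\alpha}{r}\theta_B\theta_A$ with $\theta_B\in\mathbb{R}^{d\times r}$, $\theta_A\in\mathbb{R}^{r\times\ell}$. Client $k$ keeps memories $m_{B,k}\in\mathbb{R}^{d\times r}$, $m_{A,k}\in\mathbb{R}^{r\times\ell}$; concatenated quantities are $\tilde m_k^t=[m_{B,k}^{t\mathsf T}\ m_{A,k}^t]$, $\Delta\tilde\theta_k^t=[\Delta\theta_{B,k}^{t\mathsf T}\ \Delta\theta_{A,k}^t]$, $\tilde\theta_k^t=[\theta_{B,k}^{t\mathsf T}\ \theta_{A,k}^t]$ (each an $r\times(d+\ell)$ matrix, identified with a vector in $\mathbb{R}^{r(d+\ell)}$), where $\theta_{B,k}^t=\mathcal{S}(m_{B,k}^t+\Delta\theta_{B,k}^t)$, $\theta_{A,k}^t=\mathcal{S}(m_{A,k}^t+\Delta\theta_{A,k}^t)$, and $\Delta\theta_{B,k}^t,\Delta\theta_{A,k}^t$ are the client's locally trained factors at round $t$. The expectation is over the randomness of $\mathcal{S}$; the updates $\Delta\tilde\theta_k^i$ are treated as given. *)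

theory Defs
  imports "HOL-Analysis.Analysis" "HOL-Probability.Probability"
begin

text \<open>Concatenated LoRA quantities are r x (d+l) real matrices, modelled as
  real^'c^'r (rows indexed by 'r, columns by 'c, CARD('c) = d + l).
  The HOL-Analysis norm on real^'c^'r is the Frobenius norm.\<close>

definition mask :: "('r::finite \<times> 'c::finite) set \<Rightarrow> real^'c^'r \<Rightarrow> real^'c^'r" where
  "mask K x = (\<chi> i. \<chi> j. if (i, j) \<in> K then x $ i $ j else 0)"

text \<open>Distribution of the error-feedback memory m^t, where S x is the (random)
  output distribution of the sparsifier on input x, drawn with fresh randomness
  in each round; D t is the given local update at round t.\<close>
primrec ef_mem ::
  "(real^'c^'r \<Rightarrow> (real^'c^'r) pmf) \<Rightarrow> (nat \<Rightarrow> real^'c^'r) \<Rightarrow> nat \<Rightarrow> (real^'c^'r) pmf" where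
  "ef_mem S D 0 = return_pmf 0"
| "ef_mem S D (Suc t) =
     bind_pmf (ef_mem S D t) (\<lambda>m. map_pmf (\<lambda>\<theta>. m + D t - \<theta>) (S (m + D t)))"

end

theory Submission
  imports Defs
begin

lemma young_aux:
  fixes s x y :: real
  assumes "0 < s" "s < 1" "0 \<le> x" "0 \<le> y"
  shows "s^2 * (x + y)^2 \<le> s * x^2 + s^2 / (1 - s) * y^2"
proof -
  have "0 \<le> ((1-s)*x - s*y)^2" by simp
  hence "s*(1-s)*(x+y)^2 \<le> (1-s)*x^2 + s*y^2"
    by (simp add: power2_eq_square algebra_simps)
  hence "s*(s*(1-s)*(x+y)^2) \<le> s*((1-s)*x^2 + s*y^2)"
    using assms by (intro mult_left_mono) auto
  moreover have "(1-s)*(s^2 / (1 - s) * y^2) = s^2*y^2" using assms by simp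
  ultimately have "(1-s)*(s^2*(x+y)^2) \<le> (1-s)*(s * x^2 + s^2 / (1 - s) * y^2)"
    by (simp add: power2_eq_square algebra_simps)
  thus ?thesis using assms by (simp add: mult_le_cancel_left)
qed

lemma young_norm:
  fixes a b :: "'a::real_normed_vector" and s :: real
  assumes "0 < s" "s < 1"
  shows "s^2 * norm (a + b)^2 \<le> s * norm a^2 + s^2 / (1 - s) * norm b^2"
proof -
  have "norm (a+b)^2 \<le> (norm a + norm b)^2"
    by (simp add: norm_triangle_ineq power_mono)
  hence "s^2 * norm (a + b)^2 \<le> s^2 * (norm a + norm b)^2"
    by (simp add: mult_left_mono)
  also have "\<dots> \<le> s * norm a^2 + s^2 / (1 - s) * norm b^2"
    using assms by (intro young_aux) auto
  finally show ?thesis .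
qed

lemma expectation_bind_finite:
  fixes p :: "'a pmf" and f :: "'a \<Rightarrow> 'b pmf" and h :: "'b \<Rightarrow> real"
  assumes "finite (set_pmf p)" "\<And>x. finite (set_pmf (f x))"
  shows "measure_pmf.expectation (p \<bind> f) h =
         measure_pmf.expectation p (\<lambda>a. measure_pmf.expectation (f a) h)"
proof -
  have "measure_pmf.expectation (p \<bind> f) h =
           (\<Sum>a\<in>set_pmf p. pmf p a *\<^sub>R measure_pmf.expectation (f a) h)"
    using assms by (intro pmf_expectation_bind) auto
  also have "\<dots> = measure_pmf.expectation p (\<lambda>a. measure_pmf.expectation (f a) h)"
    using assms by (subst integral_measure_pmf[of "set_pmf p"]) auto
  finally show ?thesis .
qed

theorem lemma1:
  fixes S :: "real^'c::finite^'r::finite \<Rightarrow> (real^'c^'r) pmf"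
    and D :: "nat \<Rightarrow> real^'c^'r"
    and u :: nat and Ok :: real and t :: nat
  defines "q \<equiv> CARD('r) * CARD('c)"
  assumes u_pos: "0 < u" and u_lt: "u < q"
    and Ok_def: "Ok = real u / real q"
    and sparse: "\<And>x y. y \<in> set_pmf (S x) \<Longrightarrow> \<exists>K. card K = u \<and> y = mask K x"
    and contr: "\<And>x. measure_pmf.expectation (S x) (\<lambda>y. norm (y - x) ^ 2)
                     \<le> (1 - Ok) * norm x ^ 2"
  shows "measure_pmf.expectation (ef_mem S D (Suc t)) (\<lambda>m. norm m ^ 2)
           \<le> 4 * (1 - Ok) / Ok ^ 2 * Max ((\<lambda>i. norm (D i) ^ 2) ` {0..t})"
proof -
  have qpos: "0 < real q" using u_lt by simp
  have Ok0: "0 < Ok" using u_pos qpos Ok_def by simp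
  have Ok1: "Ok < 1" using u_lt qpos Ok_def by simp
  define \<delta> where "\<delta> = 1 - Ok"
  define s where "s = sqrt \<delta>"
  have d0: "0 < \<delta>" "\<delta> < 1" using Ok0 Ok1 \<delta>_def by auto
  have s0: "0 < s" "s < 1" using d0 s_def by auto
  have ss: "s^2 = \<delta>" using d0 s_def by simp
  have finS: "finite (set_pmf (S x))" for x
  proof -
    have "set_pmf (S x) \<subseteq> (\<lambda>K. mask K x) ` UNIV" using sparse by blast
    thus ?thesis by (rule finite_subset) simp
  qed
  have finE: "finite (set_pmf (ef_mem S D n))" for n
    by (induction n) (auto simp: finS)
  define E where "E n = measure_pmf.expectation (ef_mem S D n) (\<lambda>m. norm m ^ 2)" for n
  define M where "M n = Max ((\<lambda>i. norm (D i) ^ 2) ` {0..n})" for n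
  define C where "C = \<delta> / (1 - s)^2"
  have step: "E (Suc n) \<le> s * E n + \<delta> / (1 - s) * norm (D n)^2" for n
  proof -
    have "E (Suc n) = measure_pmf.expectation (ef_mem S D n)
            (\<lambda>m. measure_pmf.expectation (S (m + D n)) (\<lambda>y. norm (y - (m + D n)) ^ 2))"
      unfolding E_def using finE finS
      by (simp add: expectation_bind_finite norm_minus_commute algebra_simps)
    also have "\<dots> \<le> measure_pmf.expectation (ef_mem S D n)
            (\<lambda>m. s * norm m ^ 2 + \<delta> / (1 - s) * norm (D n)^2)"
    proof (rule integral_mono)
      show "integrable (measure_pmf (ef_mem S D n)) (\<lambda>m. s * norm m ^ 2 + \<delta> / (1 - s) * norm (D n)^2)"
        using finE by (rule integrable_measure_pmf_finite)
      show "integrable (measure_pmf (ef_mem S D n)) (\<lambda>m. measure_pmf.expectation (S (m + D n)) (\<lambda>y. norm (y - (m + D n)) ^ 2))"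
        using finE by (rule integrable_measure_pmf_finite)
      fix m
      have "measure_pmf.expectation (S (m + D n)) (\<lambda>y. norm (y - (m + D n)) ^ 2)
             \<le> \<delta> * norm (m + D n) ^ 2" using contr \<delta>_def by simp
      also have "\<dots> \<le> s * norm m ^ 2 + \<delta> / (1 - s) * norm (D n)^2"
        using young_norm[OF s0, of m "D n"] ss by simp
      finally show "measure_pmf.expectation (S (m + D n)) (\<lambda>y. norm (y - (m + D n)) ^ 2)
             \<le> s * norm m ^ 2 + \<delta> / (1 - s) * norm (D n)^2" .
    qed
    also have "\<dots> = s * E n + \<delta> / (1 - s) * norm (D n)^2"
      unfolding E_def
      by (subst Bochner_Integration.integral_add) (auto intro: integrable_measure_pmf_finite[OF finE])
    finally show ?thesis .
  qed
  have Mge: "norm (D i)^2 \<le> M n" if "i \<le> n" for i n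
    unfolding M_def using that by (intro Max_ge) auto
  have Mmono: "M n \<le> M (Suc n)" for n
    unfolding M_def by (rule Max_mono) auto
  have M0: "0 \<le> M n" for n using Mge[of 0 n] by (meson order_trans zero_le_power2 le0)
  have C0: "0 \<le> C" using d0 C_def by simp
  have CE: "s * C + \<delta> / (1 - s) = C"
  proof -
    have ne: "1 - s \<noteq> 0" using s0 by simp
    have "s * C + \<delta> / (1 - s) = (s * \<delta> + \<delta> * (1 - s)) / (1 - s)^2"
    proof -
      have a: "\<delta> / (1 - s) = \<delta> * (1 - s) / (1 - s)^2" using ne by (simp add: power2_eq_square)
      have b: "s * C = s * \<delta> / (1 - s)^2" unfolding C_def by simp
      show ?thesis unfolding a b by (simp add: add_divide_distrib)
    qed
    also have "\<dots> = C" unfolding C_def by (simp add: algebra_simps)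
    finally show ?thesis .
  qed
  have main: "E n \<le> C * M n" for n
  proof (induction n)
    case 0
    then show ?case using C0 M0 by (simp add: E_def)
  next
    case (Suc n)
    have "E (Suc n) \<le> s * E n + \<delta> / (1 - s) * norm (D n)^2" by (rule step)
    also have "\<dots> \<le> s * (C * M (Suc n)) + \<delta> / (1 - s) * M (Suc n)"
    proof (intro add_mono mult_left_mono)
      show "E n \<le> C * M (Suc n)" using Suc.IH Mmono[of n] C0 by (meson order_trans mult_left_mono)
      show "norm (D n)^2 \<le> M (Suc n)" by (rule Mge) simp
    qed (use s0 d0 in auto)
    also have "\<dots> = (s * C + \<delta> / (1 - s)) * M (Suc n)" by (simp add: algebra_simps)
    finally show ?case using CE by simp
  qed
  have "1 - s \<ge> Ok / 2"
  proof -
    have "\<delta> \<le> (1 - Ok/2)^2" using \<delta>_def by (simp add: power2_eq_square algebra_simps)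
    hence "sqrt \<delta> \<le> sqrt ((1 - Ok/2)^2)" by (rule real_sqrt_le_mono)
    also have "\<dots> = 1 - Ok/2" using Ok1 by simp
    finally have "s \<le> 1 - Ok/2" unfolding s_def .
    thus ?thesis by simp
  qed
  hence "(Ok/2)^2 \<le> (1 - s)^2" using Ok0 by (intro power_mono) auto
  hence "C \<le> \<delta> / (Ok/2)^2" unfolding C_def using d0 Ok0 s0
    by (intro divide_left_mono) (auto intro!: mult_pos_pos)
  also have "\<dots> = 4 * (1 - Ok) / Ok ^ 2" using \<delta>_def by (simp add: power2_eq_square field_simps)
  finally have "C \<le> 4 * (1 - Ok) / Ok ^ 2" .
  hence "C * M t \<le> 4 * (1 - Ok) / Ok ^ 2 * M t" using M0 by (intro mult_right_mono) auto
  moreover have "E (Suc t) \<le> C * M t"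
  proof -
    have "E (Suc t) \<le> s * E t + \<delta> / (1 - s) * norm (D t)^2" by (rule step)
    also have "\<dots> \<le> s * (C * M t) + \<delta> / (1 - s) * M t"
      using main[of t] Mge[of t t] s0 d0 by (intro add_mono mult_left_mono) auto
    also have "\<dots> = (s * C + \<delta> / (1 - s)) * M t" by (simp add: algebra_simps)
    finally show ?thesis using CE by simp
  qed
  ultimately show ?thesis unfolding E_def M_def by simp
qed

end
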